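(* Let $a,b,c$ be positive numbers with $a<b<c$; set $c_0=c-\lfloor c/b\rfloor b$, $(c_0+a-b)_+=\max(c_0+a-b,0)$ and $c_0\wedge a=\min(c_0,a)$. Define $\lambda_{a,b,c}(t)=\lfloor c/b\rfloor b+b$ for $t\in[0,(c_0+a-b)_+)+a\mathbb Z$, $\lambda_{a,b,c}(t)=0$ for $t\in[(c_0+a-b)_+,c_0\wedge a)+a\mathbb Z$, $\lambda_{a,b,c}(t)=\lfloor c/b\rfloor b$ for $t\in[c_0\wedge a,a)+a\mathbb Z$; and $\tilde\lambda_{a,b,c}(t)=-\lfloor c/b\rfloor b-b$ for $t\in[c-(c_0+a-b)_+,c)+a\mathbb Z$, $\tilde\lambda_{a,b,c}(t)=0$ for $t\in[c-c_0\wedge a,c-(c_0+a-b)_+)+a\mathbb Z$, $\tilde\lambda_{a,b,c}(t)=-\lfloor c/b\rfloor b$ for $t\in[c-a,c-c_0\wedge a)+a\mathbb Z$. Then $$\mathcal S_{a,b,c}\cap\Big(\big([(c_0+a-b)_+,c_0\wedge a)\cup[c-c_0\wedge a,c-(c_0+a-b)_+)\big)+a\mathbb Z\Big)=\emptyset,$$ and for every $t\in\mathcal S_{a,b,c}$ and every $\mathbf x\in\mathcal B_b^0$ with $\mathbf M_{a,b,c}(t)\mathbf x=\mathbf 1$ one has $\mathbf x(\lambda)=1$ for $\lambda\in\{\lambda_{a,b,c}(t),0,\tilde\lambda_{a,b,c}(t)\}$ and $\mathbf x(\lambda)=0$ for all $\lambda\in b\mathbb Z$ with $\tilde\lambda_{a,b,c}(t)<\lambda<\lambda_{a,b,c}(t)$,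 $\lambda\ne0$.
   Context: For $a,b,c>0$ and $t\in\mathbb R$, $\mathbf M_{a,b,c}(t)=(\chi_{[0,c)}(t-\mu+\lambda))_{\mu\in a\mathbb Z,\lambda\in b\mathbb Z}$ is the infinite matrix with rows indexed by $a\mathbb Z$ and columns by $b\mathbb Z$, acting by $(\mathbf M_{a,b,c}(t)\mathbf x)(\mu)=\sum_{\lambda\in b\mathbb Z}\chi_{[0,c)}(t-\mu+\lambda)\mathbf x(\lambda)$. $\mathcal B_b$ is the set of vectors $(\mathbf x(\lambda))_{\lambda\in b\mathbb Z}$ with entries in $\{0,1\}$, and $\mathcal B_b^0=\{\mathbf x\in\mathcal B_b:\mathbf x(0)=1\}$. $\mathbf 1$ denotes the vector indexed by $a\mathbb Z$ all of whose entries are $1$. $\mathcal S_{a,b,c}=\{t\in\mathbb R:\mathbf M_{a,b,c}(t)\mathbf x=\mathbf 1\text{ for some }\mathbf x\in\mathcal B_b^0\}$. For $A\subset\mathbb R$, $A+a\mathbb Z=\{x+ak:x\in A,k\in\mathbb Z\}$. *)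

theory Defs
  imports Complex_Main
begin

text \<open>Vectors indexed by b\<int> are represented as functions x :: int \<Rightarrow> int, where
  x k stands for the entry x(b k).  Rows of M are indexed by a\<int>, row a m.\<close>

definition chi :: "real \<Rightarrow> real \<Rightarrow> int" where
  "chi c s = (if 0 \<le> s \<and> s < c then 1 else 0)"

text \<open>(M_{a,b,c}(t) x)(a m) = sum over \<lambda> = b k of chi_[0,c)(t - a m + b k) x(b k).
  Only finitely many terms are nonzero (those k in the set below), so the series is
  the finite sum over that set.\<close>
definition Mmul :: "real \<Rightarrow> real \<Rightarrow> real \<Rightarrow> real \<Rightarrow> (int \<Rightarrow> int) \<Rightarrow> int \<Rightarrow> int" where
  "Mmul a b c t x m =
     (\<Sum>k\<in>{k::int. 0 \<le> t - a * of_int m + b * of_int k \<and> t - a * of_int m + b * of_int k < c}.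
        chi c (t - a * of_int m + b * of_int k) * x k)"

definition Bb :: "(int \<Rightarrow> int) set" where
  "Bb = {x. \<forall>k. x k \<in> {0, 1}}"

definition Bb0 :: "(int \<Rightarrow> int) set" where
  "Bb0 = {x \<in> Bb. x 0 = 1}"

definition S_set :: "real \<Rightarrow> real \<Rightarrow> real \<Rightarrow> real set" where
  "S_set a b c = {t. \<exists>x\<in>Bb0. \<forall>m::int. Mmul a b c t x m = 1}"

definition plus_aZ :: "real set \<Rightarrow> real \<Rightarrow> real set" where
  "plus_aZ A a = {y + a * of_int k | y k. y \<in> A}"

definition c0 :: "real \<Rightarrow> real \<Rightarrow> real" where
  "c0 b c = c - of_int \<lfloor>c / b\<rfloor> * b"

definition pplus :: "real \<Rightarrow> real \<Rightarrow> real \<Rightarrow> real" where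
  "pplus a b c = max (c0 b c + a - b) 0"

definition cmin :: "real \<Rightarrow> real \<Rightarrow> real \<Rightarrow> real" where
  "cmin a b c = min (c0 b c) a"

text \<open>The three residue sets partition \<real> (for 0 < a < b), so the if-chains below
  define exactly the piecewise functions of the paper.\<close>
definition lam :: "real \<Rightarrow> real \<Rightarrow> real \<Rightarrow> real \<Rightarrow> real" where
  "lam a b c t =
     (if t \<in> plus_aZ {0..<pplus a b c} a then of_int \<lfloor>c / b\<rfloor> * b + b
      else if t \<in> plus_aZ {pplus a b c..<cmin a b c} a then 0
      else of_int \<lfloor>c / b\<rfloor> * b)"

definition lamt :: "real \<Rightarrow> real \<Rightarrow> real \<Rightarrow> real \<Rightarrow> real" where
  "lamt a b c t =
     (if t \<in> plus_aZ {c - pplus a b c..<c} a then - of_int \<lfloor>c / b\<rfloor> * b - b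
      else if t \<in> plus_aZ {c - cmin a b c..<c - pplus a b c} a then 0
      else - of_int \<lfloor>c / b\<rfloor> * b)"

end

theory Submission
  imports Defs
begin


lemma win_props:
  assumes x: "x \<in> Bb" and M: "Mmul a b c t x m = 1"
  shows win_ex: "\<exists>k. 0 \<le> t - a * of_int m + b * of_int k \<and> t - a * of_int m + b * of_int k < c \<and> x k = 1"
    and win_uniq: "\<And>k1 k2. 0 \<le> t - a * of_int m + b * of_int k1 \<Longrightarrow> t - a * of_int m + b * of_int k1 < c \<Longrightarrow> x k1 = 1
       \<Longrightarrow> 0 \<le> t - a * of_int m + b * of_int k2 \<Longrightarrow> t - a * of_int m + b * of_int k2 < c \<Longrightarrow> x k2 = 1 \<Longrightarrow> k1 = k2"
proof -
  define W where "W = {k::int. 0 \<le> t - a * of_int m + b * of_int k \<and> t - a * of_int m + b * of_int k < c}"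
  have S: "sum x W = 1"
  proof -
    have "Mmul a b c t x m = sum x W"
      unfolding Mmul_def W_def by (rule sum.cong) (auto simp: chi_def)
    thus ?thesis using M by simp
  qed
  have fin: "finite W" using S by (metis sum.infinite zero_neq_one)
  have x01: "\<And>k. x k = 0 \<or> x k = 1" using x by (auto simp: Bb_def)
  obtain k where "k \<in> W" "x k \<noteq> 0" using S by (metis sum.neutral zero_neq_one)
  then show "\<exists>k. 0 \<le> t - a * of_int m + b * of_int k \<and> t - a * of_int m + b * of_int k < c \<and> x k = 1"
    using x01 unfolding W_def by blast
  fix k1 k2
  assume h: "0 \<le> t - a * of_int m + b * of_int k1" "t - a * of_int m + b * of_int k1 < c" "x k1 = 1"
    "0 \<le> t - a * of_int m + b * of_int k2" "t - a * of_int m + b * of_int k2 < c" "x k2 = 1"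
  show "k1 = k2"
  proof (rule ccontr)
    assume ne: "k1 \<noteq> k2"
    have sub: "{k1, k2} \<subseteq> W" using h unfolding W_def by auto
    have "sum x {k1, k2} \<le> sum x W"
      by (rule sum_mono2[OF fin sub]) (metis x01 order_refl zero_le_one)
    moreover have "sum x {k1, k2} = 2" using ne h by simp
    ultimately show False using S by simp
  qed
qed

lemma lemA:
  assumes a: "0 < a" and "0 \<le> \<alpha>" "\<beta> \<le> a"
  shows "t \<in> plus_aZ {\<alpha>..<\<beta>} a \<longleftrightarrow> \<alpha> \<le> t - a * of_int \<lfloor>t / a\<rfloor> \<and> t - a * of_int \<lfloor>t / a\<rfloor> < \<beta>"
proof
  assume "t \<in> plus_aZ {\<alpha>..<\<beta>} a"
  then obtain y k where t: "t = y + a * of_int k" "\<alpha> \<le> y" "y < \<beta>" unfolding plus_aZ_def by auto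
  have "\<lfloor>t / a\<rfloor> = k"
  proof -
    have "t / a = y / a + of_int k" using t a by (simp add: field_simps)
    moreover have "0 \<le> y / a" "y / a < 1" using t assms by (auto simp: field_simps)
    ultimately show ?thesis by (simp add: floor_eq_iff)
  qed
  thus "\<alpha> \<le> t - a * of_int \<lfloor>t / a\<rfloor> \<and> t - a * of_int \<lfloor>t / a\<rfloor> < \<beta>" using t by simp
next
  assume "\<alpha> \<le> t - a * of_int \<lfloor>t / a\<rfloor> \<and> t - a * of_int \<lfloor>t / a\<rfloor> < \<beta>"
  thus "t \<in> plus_aZ {\<alpha>..<\<beta>} a" unfolding plus_aZ_def
    by (intro CollectI exI[of _ "t - a * of_int \<lfloor>t / a\<rfloor>"] exI[of _ "\<lfloor>t / a\<rfloor>"]) auto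
qed

lemma cancel_lt: "(0::real) < b \<Longrightarrow> b * of_int K < b * of_int N \<Longrightarrow> K < N"
  by (simp add: mult_less_cancel_left_pos)

lemma lemB:
  assumes a: "0 < a" and "0 \<le> \<alpha>" "\<beta> \<le> a" and u: "u = a * of_int m1 - t + c" "0 < u" "u \<le> a"
  shows "t \<in> plus_aZ {c - \<beta>..<c - \<alpha>} a \<longleftrightarrow> \<alpha> < u \<and> u \<le> \<beta>"
proof
  assume "t \<in> plus_aZ {c - \<beta>..<c - \<alpha>} a"
  then obtain y k where t: "t = y + a * of_int k" "c - \<beta> \<le> y" "y < c - \<alpha>" unfolding plus_aZ_def by auto
  have e: "a * of_int (m1 - k) = u - (c - y)" using t u by (simp add: algebra_simps)
  have "a * of_int (m1 - k) < a * of_int 1" using e t assms by simp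
  hence "m1 - k < 1" using a cancel_lt by blast
  moreover have "a * of_int (-1) < a * of_int (m1 - k)" using e t assms by simp
  hence "-1 < m1 - k" using a cancel_lt by blast
  ultimately have "m1 = k" by simp
  thus "\<alpha> < u \<and> u \<le> \<beta>" using t u by simp
next
  assume "\<alpha> < u \<and> u \<le> \<beta>"
  thus "t \<in> plus_aZ {c - \<beta>..<c - \<alpha>} a" unfolding plus_aZ_def using u
    by (intro CollectI exI[of _ "c - u"] exI[of _ m1]) auto
qed


lemma main:
  fixes a b c t :: real and x :: "int \<Rightarrow> int"
  assumes pos: "0 < a" "a < b" "b < c" and xB: "x \<in> Bb0" and M: "\<forall>m::int. Mmul a b c t x m = 1"
  shows "t \<notin> plus_aZ {pplus a b c..<cmin a b c} a \<and> t \<notin> plus_aZ {c - cmin a b c..<c - pplus a b c} a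
     \<and> (\<forall>k::int. b * of_int k \<in> {lam a b c t, 0, lamt a b c t} \<longrightarrow> x k = 1)
     \<and> (\<forall>k::int. lamt a b c t < b * of_int k \<and> b * of_int k < lam a b c t \<and> k \<noteq> 0 \<longrightarrow> x k = 0)"
proof -
  have x: "x \<in> Bb" and x0: "x 0 = 1" using xB by (auto simp: Bb0_def)
  have x01: "\<And>k. x k = 0 \<or> x k = 1" using x by (auto simp: Bb_def)
  note ex = win_ex[OF x M[rule_format]]
  note un = win_uniq[OF x M[rule_format]]
  have b: "0 < b" using pos by simp
  have "\<exists>k>0. x k = 1"
  proof -
    obtain k where k: "0 \<le> t - a * of_int (\<lfloor>t/a\<rfloor> + 1) + b * of_int k" "x k = 1"
      using ex[of "\<lfloor>t/a\<rfloor> + 1"] by blast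
    have "t/a < of_int \<lfloor>t/a\<rfloor> + 1" by linarith
    hence "t < a * (of_int \<lfloor>t/a\<rfloor> + 1)" using pos by (simp add: field_simps)
    hence "b * of_int 0 < b * of_int k" using k by (simp add: algebra_simps)
    hence "0 < k" using cancel_lt[OF b] by blast
    thus ?thesis using k by blast
  qed
  then obtain n0 :: nat where "0 < int n0 \<and> x (int n0) = 1"
    by (metis pos_int_cases)
  hence "\<exists>n::nat. n > 0 \<and> x (int n) = 1" by auto
  then obtain nK :: nat where nK: "nK > 0 \<and> x (int nK) = 1" "\<And>m. m < nK \<Longrightarrow> \<not> (m > 0 \<and> x (int m) = 1)"
    using exists_least_iff[of "\<lambda>n::nat. n > 0 \<and> x (int n) = 1"] by blast
  define K where "K = int nK"
  have K: "K > 0" "x K = 1" using nK K_def by auto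
  have Kmin: "\<And>k. 0 < k \<Longrightarrow> k < K \<Longrightarrow> x k = 0"
  proof -
    fix k :: int assume "0 < k" "k < K"
    hence "nat k < nK" "nat k > 0" using K_def by auto
    hence "x (int (nat k)) \<noteq> 1" using nK(2) by blast
    thus "x k = 0" using x01 \<open>0 < k\<close> by (metis int_nat_eq less_le)
  qed
  have "\<exists>k<0. x k = 1"
  proof -
    obtain k where k: "t - a * of_int (\<lfloor>(t - c)/a\<rfloor>) + b * of_int k < c" "x k = 1"
      using ex[of "\<lfloor>(t-c)/a\<rfloor>"] by blast
    have "of_int \<lfloor>(t - c)/a\<rfloor> \<le> (t-c)/a" by linarith
    hence "of_int \<lfloor>(t - c)/a\<rfloor> * a \<le> t - c" using pos_le_divide_eq[OF pos(1)] by blast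
    hence "a * of_int \<lfloor>(t - c)/a\<rfloor> \<le> t - c" by (simp add: mult.commute)
    hence "b * of_int k < b * of_int 0" using k by (simp add: algebra_simps)
    hence "k < 0" using cancel_lt[OF b] by blast
    thus ?thesis using k by blast
  qed
  then obtain n1 :: nat where "0 < int n1 \<and> x (- int n1) = 1"
    by (metis neg_int_cases add.inverse_inverse neg_less_0_iff_less)
  hence "\<exists>n::nat. n > 0 \<and> x (- int n) = 1" by auto
  then obtain nL :: nat where nL: "nL > 0 \<and> x (- int nL) = 1" "\<And>m. m < nL \<Longrightarrow> \<not> (m > 0 \<and> x (- int m) = 1)"
    using exists_least_iff[of "\<lambda>n::nat. n > 0 \<and> x (- int n) = 1"] by blast
  define L where "L = - int nL"
  have L: "L < 0" "x L = 1" using nL L_def by auto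
  have Lmax: "\<And>k. L < k \<Longrightarrow> k < 0 \<Longrightarrow> x k = 0"
  proof -
    fix k :: int assume "L < k" "k < 0"
    hence "nat (-k) < nL" "nat (-k) > 0" using L_def by auto
    hence "x (- int (nat (-k))) \<noteq> 1" using nL(2) by blast
    thus "x k = 0" using x01 \<open>k < 0\<close> by (metis add.inverse_inverse int_nat_eq less_le neg_0_less_iff_less)
  qed
  have between: "\<And>k. L < k \<Longrightarrow> k < K \<Longrightarrow> k \<noteq> 0 \<Longrightarrow> x k = 0"
    using Kmin Lmax by (metis linorder_neqE_linordered_idom)
  define m0 where "m0 = \<lfloor>t/a\<rfloor>"
  define r where "r = t - a * of_int m0"
  have r: "0 \<le> r" "r < a"
  proof -
    have "of_int m0 \<le> t/a" "t/a < of_int m0 + 1" unfolding m0_def by linarith+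
    thus "0 \<le> r" "r < a" unfolding r_def using pos by (auto simp: field_simps)
  qed
  have Klo: "c - r \<le> b * of_int K"
  proof (rule ccontr)
    assume "\<not> ?thesis"
    hence "t - a * of_int m0 + b * of_int K < c" using r_def by simp
    moreover have "0 \<le> t - a * of_int m0 + b * of_int 0" "t - a * of_int m0 + b * of_int 0 < c"
      using r r_def pos by auto
    moreover have "0 \<le> t - a * of_int m0 + b * of_int K" using r r_def K b by simp
    ultimately have "0 = K" using un[of m0 0 K] x0 K by simp
    thus False using K by simp
  qed
  have Khi: "b * of_int K < c + a - r"
  proof -
    obtain k where k: "0 \<le> t - a * of_int (m0 + 1) + b * of_int k" "t - a * of_int (m0+1) + b * of_int k < c" "x k = 1"
      using ex[of "m0 + 1"] by blast
    have "b * of_int 0 < b * of_int k" using k r r_def by (simp add: algebra_simps)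
    hence "0 < k" using cancel_lt[OF b] by blast
    hence "\<not> k < K" using Kmin k by fastforce
    hence "b * of_int K \<le> b * of_int k" using b by simp
    thus ?thesis using k r_def by (simp add: algebra_simps)
  qed
  define m1 where "m1 = \<lfloor>(t - c)/a\<rfloor> + 1"
  define u where "u = a * of_int m1 - t + c"
  have u: "0 < u" "u \<le> a"
  proof -
    have "of_int m1 - 1 \<le> (t-c)/a" "(t-c)/a < of_int m1" unfolding m1_def by linarith+
    hence "a * (of_int m1 - 1) \<le> t - c" "t - c < a * of_int m1" using pos by (auto simp: field_simps)
    thus "0 < u" "u \<le> a" unfolding u_def by (auto simp: algebra_simps)
  qed
  have Llo: "c - u < - b * of_int L"
  proof (rule ccontr)
    assume "\<not> ?thesis"
    hence "0 \<le> t - a * of_int m1 + b * of_int L" using u_def by simp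
    moreover have "0 \<le> t - a * of_int m1 + b * of_int 0" "t - a * of_int m1 + b * of_int 0 < c"
      using u u_def pos by auto
    moreover have "b * of_int L < 0" using b L by (simp add: mult_pos_neg)
    hence "t - a * of_int m1 + b * of_int L < c" using u u_def by linarith
    ultimately have "0 = L" using un[of m1 0 L] x0 L by simp
    thus False using L by simp
  qed
  have Lhi: "- b * of_int L \<le> c + a - u"
  proof -
    obtain k where k: "0 \<le> t - a * of_int (m1 - 1) + b * of_int k" "t - a * of_int (m1 - 1) + b * of_int k < c" "x k = 1"
      using ex[of "m1 - 1"] by blast
    have "b * of_int k < b * of_int 0" using k u u_def by (simp add: algebra_simps)
    hence "k < 0" using cancel_lt[OF b] by blast
    hence "\<not> L < k" using Lmax k by fastforce
    hence "b * of_int k \<le> b * of_int L" using b by simp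
    thus ?thesis using k u_def by (simp add: algebra_simps)
  qed
  define n where "n = \<lfloor>c / b\<rfloor>"
  define C where "C = c0 b c"
  have c0: "c = b * of_int n + C" unfolding C_def c0_def n_def by simp
  have c0b: "0 \<le> C" "C < b"
  proof -
    have "of_int n \<le> c/b" "c/b < of_int n + 1" unfolding n_def by linarith+
    hence "of_int n * b \<le> c" "c < (of_int n + 1) * b" using b by (auto simp: field_simps)
    thus "0 \<le> C" "C < b" using c0 by (auto simp: algebra_simps)
  qed
  have pp: "0 \<le> pplus a b c" "pplus a b c \<le> cmin a b c" "cmin a b c \<le> a"
    unfolding pplus_def cmin_def using c0b pos C_def by auto
  have pp1: "C + a - b \<le> pplus a b c" "0 < pplus a b c \<Longrightarrow> pplus a b c = C + a - b"
    unfolding pplus_def C_def by auto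
  have cm1: "cmin a b c \<le> C" "\<And>v. v < a \<Longrightarrow> cmin a b c \<le> v \<Longrightarrow> C \<le> v"
    unfolding cmin_def C_def by auto
  have e1: "b * of_int (n+1) = b * of_int n + b" "b * of_int (n+2) = b * of_int n + 2 * b"
    "b * of_int (n - 1) = b * of_int n - b" "b * of_int (- L) = - (b * of_int L)"
    by (simp_all add: algebra_simps)
  have memA: "\<And>\<alpha> \<beta>. 0 \<le> \<alpha> \<Longrightarrow> \<beta> \<le> a \<Longrightarrow> t \<in> plus_aZ {\<alpha>..<\<beta>} a \<longleftrightarrow> \<alpha> \<le> r \<and> r < \<beta>"
    using lemA[OF pos(1)] unfolding r_def m0_def by blast
  have memB: "\<And>\<alpha> \<beta>. 0 \<le> \<alpha> \<Longrightarrow> \<beta> \<le> a \<Longrightarrow> t \<in> plus_aZ {c - \<beta>..<c - \<alpha>} a \<longleftrightarrow> \<alpha> < u \<and> u \<le> \<beta>"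
    using lemB[OF pos(1) _ _ u_def u] by blast
  have F1: "t \<notin> plus_aZ {pplus a b c..<cmin a b c} a"
  proof
    assume "t \<in> plus_aZ {pplus a b c..<cmin a b c} a"
    hence h: "pplus a b c \<le> r" "r < cmin a b c" using memA pp by auto
    have i1: "b * of_int n < b * of_int K" using h Klo c0 cm1 by linarith
    moreover have i2: "b * of_int K < b * of_int (n + 1)" unfolding e1 using h Khi c0 pp1 by linarith
    ultimately show False using cancel_lt[OF b i1] cancel_lt[OF b i2] by simp
  qed
  have F2: "t \<notin> plus_aZ {c - cmin a b c..<c - pplus a b c} a"
  proof
    assume "t \<in> plus_aZ {c - cmin a b c..<c - pplus a b c} a"
    hence h: "pplus a b c < u" "u \<le> cmin a b c" using memB pp by auto
    have i1: "b * of_int n < b * of_int (-L)" unfolding e1 using h Llo c0 cm1 by linarith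
    moreover have i2: "b * of_int (-L) < b * of_int (n + 1)" unfolding e1 using h Lhi c0 pp1 by linarith
    ultimately show False using cancel_lt[OF b i1] cancel_lt[OF b i2] by simp
  qed
  have lamK: "lam a b c t = b * of_int K"
  proof (cases "r < pplus a b c")
    case True
    hence t1: "t \<in> plus_aZ {0..<pplus a b c} a" using memA pp r by auto
    have pe: "pplus a b c = C + a - b" using pp1 True r by linarith
    have i1: "b * of_int n < b * of_int K" using True pe Klo c0 pos by linarith
    moreover have i2: "b * of_int K < b * of_int (n + 2)" unfolding e1(2) unfolding e1 using True Khi c0 c0b r pos by linarith
    ultimately have "K = n + 1" using cancel_lt[OF b i1] cancel_lt[OF b i2] by simp
    thus ?thesis unfolding lam_def using t1 n_def by (simp add: algebra_simps)
  next
    case False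
    hence t1: "t \<notin> plus_aZ {0..<pplus a b c} a" using memA pp r by auto
    have h: "cmin a b c \<le> r" using F1 False memA pp by force
    have h2: "C \<le> r" using cm1(2)[OF r(2) h] .
    have i1: "b * of_int (n - 1) < b * of_int K" unfolding e1 using h2 c0b Klo c0 pos r by linarith
    moreover have i2: "b * of_int K < b * of_int (n + 1)" unfolding e1 using h2 Khi c0 c0b r pos by linarith
    ultimately have "K = n" using cancel_lt[OF b i1] cancel_lt[OF b i2] by simp
    thus ?thesis unfolding lam_def using t1 F1 n_def by (simp add: algebra_simps)
  qed
  have lamL: "lamt a b c t = b * of_int L"
  proof (cases "u \<le> pplus a b c")
    case True
    have t1: "t \<in> plus_aZ {c - pplus a b c..<c} a" using memB[of 0 "pplus a b c"] pp u True by simp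
    have pe: "pplus a b c = C + a - b" using pp1 True u by linarith
    have i1: "b * of_int n < b * of_int (-L)" unfolding e1 using True pe Llo c0 pos by linarith
    moreover have i2: "b * of_int (-L) < b * of_int (n + 2)" unfolding e1 using True Lhi c0 c0b u pos by linarith
    ultimately have "-L = n + 1" using cancel_lt[OF b i1] cancel_lt[OF b i2] by simp
    hence hL: "real_of_int L = - of_int n - 1" by linarith
    show ?thesis unfolding lamt_def hL using t1 n_def by (simp add: algebra_simps)
  next
    case False
    have t1: "t \<notin> plus_aZ {c - pplus a b c..<c} a" using memB[of 0 "pplus a b c"] pp u False by simp
    have h: "cmin a b c < u" using F2 False memB pp by force
    have h2: "C < u" using h cm1 u pos unfolding cmin_def C_def by auto
    have i1: "b * of_int (n - 1) < b * of_int (-L)" unfolding e1 using h2 c0b Llo c0 pos u by linarith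
    moreover have i2: "b * of_int (-L) < b * of_int (n + 1)" unfolding e1 using h2 Lhi c0 c0b u pos by linarith
    ultimately have "-L = n" using cancel_lt[OF b i1] cancel_lt[OF b i2] by simp
    hence hL: "real_of_int L = - of_int n" by linarith
    show ?thesis unfolding lamt_def hL using t1 F2 n_def by (simp add: algebra_simps)
  qed
  have inj: "\<And>k j. b * of_int k = b * of_int j \<Longrightarrow> k = j" using b by simp
  show ?thesis
  proof (intro conjI allI impI)
    show "t \<notin> plus_aZ {pplus a b c..<cmin a b c} a" by (rule F1)
    show "t \<notin> plus_aZ {c - cmin a b c..<c - pplus a b c} a" by (rule F2)
  next
    fix k assume "b * of_int k \<in> {lam a b c t, 0, lamt a b c t}"
    hence "k = K \<or> k = 0 \<or> k = L" using lamK lamL inj b by auto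
    thus "x k = 1" using K L x0 by auto
  next
    fix k assume h: "lamt a b c t < b * of_int k \<and> b * of_int k < lam a b c t \<and> k \<noteq> 0"
    hence "L < k" "k < K" using lamK lamL cancel_lt[OF b] by auto
    thus "x k = 0" using between h by blast
  qed
qed


theorem proposition3p6:
  fixes a b c :: real
  assumes "0 < a" "a < b" "b < c"
  shows "S_set a b c \<inter>
           plus_aZ ({pplus a b c..<cmin a b c} \<union> {c - cmin a b c..<c - pplus a b c}) a = {}
     \<and> (\<forall>t x. t \<in> S_set a b c \<and> x \<in> Bb0 \<and> (\<forall>m::int. Mmul a b c t x m = 1) \<longrightarrow>
           (\<forall>k::int. b * of_int k \<in> {lam a b c t, 0, lamt a b c t} \<longrightarrow> x k = 1) \<and>
           (\<forall>k::int. lamt a b c t < b * of_int k \<and> b * of_int k < lam a b c t \<and> k \<noteq> 0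
              \<longrightarrow> x k = 0))"
proof (intro conjI allI impI)
  have U: "\<And>A B. plus_aZ (A \<union> B) a = plus_aZ A a \<union> plus_aZ B a"
    unfolding plus_aZ_def by blast
  show "S_set a b c \<inter>
           plus_aZ ({pplus a b c..<cmin a b c} \<union> {c - cmin a b c..<c - pplus a b c}) a = {}"
  proof (rule ccontr)
    assume "\<not> ?thesis"
    then obtain t where t: "t \<in> S_set a b c"
      "t \<in> plus_aZ {pplus a b c..<cmin a b c} a \<union> plus_aZ {c - cmin a b c..<c - pplus a b c} a"
      unfolding U by blast
    then obtain x where "x \<in> Bb0" "\<forall>m::int. Mmul a b c t x m = 1" unfolding S_set_def by blast
    from main[OF assms this] t(2) show False by blast
  qed
next
  fix t x k
  assume h: "t \<in> S_set a b c \<and> x \<in> Bb0 \<and> (\<forall>m::int. Mmul a b c t x m = 1)"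
  { assume "b * of_int k \<in> {lam a b c t, 0, lamt a b c t}"
    thus "x k = 1" using main[OF assms] h by blast }
  { assume "lamt a b c t < b * of_int k \<and> b * of_int k < lam a b c t \<and> k \<noteq> 0"
    thus "x k = 0" using main[OF assms] h by blast }
qed

end
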